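(* Let $p:E\to B$ be a morphism in $\mathbf{CLS}$ that is surjective, and let $E'$ be a closure space with the same underlying set as $E$ such that the identity map $1_E:E'\to E$ is a morphism in $\mathbf{CLS}$ (i.e. $\overline{Y}'\subseteq\overline{Y}$ for all $Y\subseteq E$). Let $E\times_BE'=\{(e,e')\mid p(e)=p(e')\}$ be the pullback in $\mathbf{CLS}$ of $p:E\to B$ and $p\circ 1_E:E'\to B$. Then the following are equivalent: (a) there exists a descent data for $p$ of the form $(E',1_E,\xi)$; (b) there exists a unique descent data for $p$ of the form $(E',1_E,\xi)$; (c) $(E',1_E,\pi_1)$ is a descent data for $p$, where $\pi_1:E\times_BE'\to E'$ is $\pi_1(e,e')=e$; (d) the first projection $\pi_1:E\times_BE'\to E'$, $(e,e')\mapsto e$, is a morphism in $\mathbf{CLS}$; (e) $\overline{Y}\cap p^{-1}\big(p(\overline{p^{-1}(p(Y))}')\big)\subseteq\overline{Y}'$ for all $Y\subseteq E$; (f) $\overline{Y}\cap p^{-1}\big(p(\overline{p^{-1}(p(Y))}')\big)=\overline{Y}'$ for all $Y\subseteq E$; (g) $\overline{Y}\cap p^{-1}\big(p(\overline{p^{-1}(p(Y))}')\big)\subseteq Y$ for all $Y\in\mathcal{C}_{E'}$; (h) $\overline{Y}\cap p^{-1}\big(p(\overline{p^{-1}(p(Y))}')\big)=Y$ for all $Y\in\mathcal{C}_{E'}$.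
   Context: A closure space is a pair $(A,\mathcal{C}_A)$ where $A$ is a set and $\mathcal{C}_A$ is a set of subsets of $A$ closed under arbitrary intersections (so $A\in\mathcal{C}_A$); elements of $\mathcal{C}_A$ are called closed. The category $\mathbf{CLS}$ has closure spaces as objects and, as morphisms $\alpha:A\to B$, maps with $\alpha^{-1}(B')\in\mathcal{C}_A$ for all $B'\in\mathcal{C}_B$. Pullbacks in $\mathbf{CLS}$ are set-theoretic pullbacks with closed sets $\pi_1^{-1}(E_0)\cap\pi_2^{-1}(A_0)$ for $E_0,A_0$ closed in the factors. Notation: for $Y\subseteq E$, $\overline{Y}$ is the closure in $E$ and $\overline{Y}'$ the closure in $E'$ (closure of $X$ in a space with closed sets $\mathcal{C}$ is $\bigcap_{X\subseteq C\in\mathcal{C}}C$). For a morphism $p:E\to B$ in a category with pullbacks, a descent data for $p$ is a triple $(C,\gamma,\xi)$ with $\gamma:C\to E$ and $\xi:E\times_BC\to C$, where $E\times_BC$ is the pullback of $p$ and $p\gamma$ with projections $\pi_1,\pi_2$, such that $\gamma\circ\xi=\pi_1$, $\xi\circ\langle\gamma,1_C\rangle=1_C$, and $\xi\circ(E\times_B\xi)=\xi\circ(E\times_B\pi_2)$ as morphisms $E\times_B(E\times_BC)\to C$ (in elements: $\xi(e,\xi(e',c))=\xi(e,c)$). *)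

theory Defs
  imports Main
begin

definition closure_space :: "'a set \<Rightarrow> 'a set set \<Rightarrow> bool" where
  "closure_space A C \<longleftrightarrow> C \<subseteq> Pow A \<and> (\<forall>S. S \<subseteq> C \<longrightarrow> A \<inter> \<Inter>S \<in> C)"

definition cls_mor :: "'a set \<Rightarrow> 'a set set \<Rightarrow> 'b set \<Rightarrow> 'b set set \<Rightarrow> ('a \<Rightarrow> 'b) \<Rightarrow> bool" where
  "cls_mor A CA B CB f \<longleftrightarrow> (\<forall>x\<in>A. f x \<in> B) \<and> (\<forall>B'\<in>CB. {x\<in>A. f x \<in> B'} \<in> CA)"

definition cl :: "'a set \<Rightarrow> 'a set set \<Rightarrow> 'a set \<Rightarrow> 'a set" where
  "cl A C X = A \<inter> \<Inter>{D \<in> C. X \<subseteq> D}"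

definition pb_set :: "'x set \<Rightarrow> 'y set \<Rightarrow> ('x \<Rightarrow> 'z) \<Rightarrow> ('y \<Rightarrow> 'z) \<Rightarrow> ('x \<times> 'y) set" where
  "pb_set X Y f g = {(x, y). x \<in> X \<and> y \<in> Y \<and> f x = g y}"

definition pb_closed :: "'x set \<Rightarrow> 'x set set \<Rightarrow> 'y set \<Rightarrow> 'y set set
    \<Rightarrow> ('x \<Rightarrow> 'z) \<Rightarrow> ('y \<Rightarrow> 'z) \<Rightarrow> ('x \<times> 'y) set set" where
  "pb_closed X CX Y CY f g =
     {{q \<in> pb_set X Y f g. fst q \<in> X0 \<and> snd q \<in> Y0} | X0 Y0. X0 \<in> CX \<and> Y0 \<in> CY}"

text \<open>Descent data (C, gamma, xi) for p : E \<rightarrow> B; equalities of morphisms are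
  equalities of maps on the respective carriers.\<close>
definition descent_data ::
  "'e set \<Rightarrow> 'e set set \<Rightarrow> 'b set \<Rightarrow> 'b set set \<Rightarrow> ('e \<Rightarrow> 'b)
   \<Rightarrow> 'c set \<Rightarrow> 'c set set \<Rightarrow> ('c \<Rightarrow> 'e) \<Rightarrow> ('e \<times> 'c \<Rightarrow> 'c) \<Rightarrow> bool" where
  "descent_data E CE B CB p C CC \<gamma> \<xi> \<longleftrightarrow>
     cls_mor C CC E CE \<gamma> \<and>
     cls_mor (pb_set E C p (p \<circ> \<gamma>)) (pb_closed E CE C CC p (p \<circ> \<gamma>)) C CC \<xi> \<and>
     (\<forall>q \<in> pb_set E C p (p \<circ> \<gamma>). \<gamma> (\<xi> q) = fst q) \<and>
     (\<forall>c \<in> C. \<xi> (\<gamma> c, c) = c) \<and>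
     (\<forall>e\<in>E. \<forall>e'\<in>E. \<forall>c\<in>C. p e = p e' \<and> p e' = p (\<gamma> c) \<longrightarrow> \<xi> (e, \<xi> (e', c)) = \<xi> (e, c))"

end

theory Submission
  imports Defs
begin


lemma cl_closed: "closure_space A C \<Longrightarrow> cl A C X \<in> C"
  unfolding closure_space_def cl_def by (metis (no_types, lifting) mem_Collect_eq subsetI)

lemma cl_sup: "X \<subseteq> A \<Longrightarrow> X \<subseteq> cl A C X"
  unfolding cl_def by blast

lemma cl_mono: "X \<subseteq> Y \<Longrightarrow> cl A C X \<subseteq> cl A C Y"
  unfolding cl_def by blast

lemma cl_least: "D \<in> C \<Longrightarrow> X \<subseteq> D \<Longrightarrow> cl A C X \<subseteq> D"
  unfolding cl_def by blast

lemma cl_id: "closure_space A C \<Longrightarrow> D \<in> C \<Longrightarrow> cl A C D = D"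
  unfolding closure_space_def cl_def by blast

lemma cl_anti: "C \<subseteq> C' \<Longrightarrow> cl A C' X \<subseteq> cl A C X"
  unfolding cl_def by blast

theorem lemma4p1:
  fixes E :: "'e set" and CE CE' :: "'e set set"
    and B :: "'b set" and CB :: "'b set set" and p :: "'e \<Rightarrow> 'b"
  assumes "closure_space E CE" and "closure_space B CB" and "closure_space E CE'"
    and "cls_mor E CE B CB p" and "p ` E = B"
    and "cls_mor E CE' E CE id"
  defines "P \<equiv> pb_set E E p (p \<circ> id)"
    and "CP \<equiv> pb_closed E CE E CE' p (p \<circ> id)"
  shows
    "((\<exists>\<xi>. descent_data E CE B CB p E CE' id \<xi>)
        \<longleftrightarrow> (\<exists>\<xi>. descent_data E CE B CB p E CE' id \<xi> \<and>
               (\<forall>\<xi>'. descent_data E CE B CB p E CE' id \<xi>' \<longrightarrow> (\<forall>q\<in>P. \<xi>' q = \<xi> q)))) \<and>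
     ((\<exists>\<xi>. descent_data E CE B CB p E CE' id \<xi> \<and>
               (\<forall>\<xi>'. descent_data E CE B CB p E CE' id \<xi>' \<longrightarrow> (\<forall>q\<in>P. \<xi>' q = \<xi> q)))
        \<longleftrightarrow> descent_data E CE B CB p E CE' id fst) \<and>
     (descent_data E CE B CB p E CE' id fst \<longleftrightarrow> cls_mor P CP E CE' fst) \<and>
     (cls_mor P CP E CE' fst \<longleftrightarrow>
        (\<forall>Y. Y \<subseteq> E \<longrightarrow>
           cl E CE Y \<inter> {e \<in> E. p e \<in> p ` cl E CE' {e' \<in> E. p e' \<in> p ` Y}} \<subseteq> cl E CE' Y)) \<and>
     ((\<forall>Y. Y \<subseteq> E \<longrightarrow>
           cl E CE Y \<inter> {e \<in> E. p e \<in> p ` cl E CE' {e' \<in> E. p e' \<in> p ` Y}} \<subseteq> cl E CE' Y)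
        \<longleftrightarrow> (\<forall>Y. Y \<subseteq> E \<longrightarrow>
           cl E CE Y \<inter> {e \<in> E. p e \<in> p ` cl E CE' {e' \<in> E. p e' \<in> p ` Y}} = cl E CE' Y)) \<and>
     ((\<forall>Y. Y \<subseteq> E \<longrightarrow>
           cl E CE Y \<inter> {e \<in> E. p e \<in> p ` cl E CE' {e' \<in> E. p e' \<in> p ` Y}} = cl E CE' Y)
        \<longleftrightarrow> (\<forall>Y \<in> CE'.
           cl E CE Y \<inter> {e \<in> E. p e \<in> p ` cl E CE' {e' \<in> E. p e' \<in> p ` Y}} \<subseteq> Y)) \<and>
     ((\<forall>Y \<in> CE'.
           cl E CE Y \<inter> {e \<in> E. p e \<in> p ` cl E CE' {e' \<in> E. p e' \<in> p ` Y}} \<subseteq> Y)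
        \<longleftrightarrow> (\<forall>Y \<in> CE'.
           cl E CE Y \<inter> {e \<in> E. p e \<in> p ` cl E CE' {e' \<in> E. p e' \<in> p ` Y}} = Y))"
proof -
  have CEsub: "CE \<subseteq> CE'"
  proof
    fix D assume "D \<in> CE"
    moreover have "D \<subseteq> E" using \<open>D \<in> CE\<close> assms(1) unfolding closure_space_def by blast
    moreover have "{x \<in> E. id x \<in> D} = D" using \<open>D \<subseteq> E\<close> by auto
    ultimately show "D \<in> CE'" using assms(6) unfolding cls_mor_def by metis
  qed
  define Q where "Q Y = cl E CE Y \<inter> {e \<in> E. p e \<in> p ` cl E CE' {e' \<in> E. p e' \<in> p ` Y}}" for Y
  have DD: "descent_data E CE B CB p E CE' id \<xi> \<longleftrightarrow> (\<forall>q\<in>P. \<xi> q = fst q) \<and> cls_mor P CP E CE' fst" for \<xi>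
  proof
    assume d: "descent_data E CE B CB p E CE' id \<xi>"
    hence eq: "\<forall>q\<in>P. \<xi> q = fst q" unfolding descent_data_def P_def by auto
    moreover have "cls_mor P CP E CE' \<xi>" using d unfolding descent_data_def P_def CP_def by auto
    moreover have "{x\<in>P. \<xi> x \<in> B'} = {x\<in>P. fst x \<in> B'}" for B' using eq by auto
    ultimately show "(\<forall>q\<in>P. \<xi> q = fst q) \<and> cls_mor P CP E CE' fst"
      unfolding cls_mor_def by auto
  next
    assume h: "(\<forall>q\<in>P. \<xi> q = fst q) \<and> cls_mor P CP E CE' fst"
    hence eq: "\<forall>q\<in>P. \<xi> q = fst q" by blast
    have "{x\<in>P. \<xi> x \<in> B'} = {x\<in>P. fst x \<in> B'}" for B' using eq by auto
    hence m: "cls_mor P CP E CE' \<xi>" using h eq unfolding cls_mor_def by auto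
    have inP: "e \<in> E \<Longrightarrow> e' \<in> E \<Longrightarrow> p e = p e' \<Longrightarrow> (e, e') \<in> P" for e e'
      unfolding P_def pb_set_def by auto
    show "descent_data E CE B CB p E CE' id \<xi>"
      unfolding descent_data_def
      using assms(6) m eq inP unfolding P_def CP_def
      by (auto simp: pb_set_def)
  qed
  have Qsup: "cl E CE' Y \<subseteq> Q Y" if "Y \<subseteq> E" for Y
  proof -
    have "cl E CE' Y \<subseteq> cl E CE Y" using cl_anti[OF CEsub] .
    moreover have "Y \<subseteq> {e' \<in> E. p e' \<in> p ` Y}" using that by auto
    hence "cl E CE' Y \<subseteq> cl E CE' {e' \<in> E. p e' \<in> p ` Y}" by (rule cl_mono)
    moreover have "cl E CE' Y \<subseteq> E" unfolding cl_def by blast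
    ultimately show ?thesis unfolding Q_def by blast
  qed
  have Qmono: "Q Y \<subseteq> Q Z" if "Y \<subseteq> Z" for Y Z
  proof -
    have "cl E CE Y \<subseteq> cl E CE Z" using that by (rule cl_mono)
    moreover have "{e' \<in> E. p e' \<in> p ` Y} \<subseteq> {e' \<in> E. p e' \<in> p ` Z}" using that by auto
    hence "cl E CE' {e' \<in> E. p e' \<in> p ` Y} \<subseteq> cl E CE' {e' \<in> E. p e' \<in> p ` Z}" by (rule cl_mono)
    ultimately show ?thesis unfolding Q_def by blast
  qed
  have CE'E: "Y \<in> CE' \<Longrightarrow> Y \<subseteq> E" for Y using assms(3) unfolding closure_space_def by blast
  have DE: "cls_mor P CP E CE' fst \<longleftrightarrow> (\<forall>Y. Y \<subseteq> E \<longrightarrow> Q Y \<subseteq> cl E CE' Y)"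
  proof
    assume m: "cls_mor P CP E CE' fst"
    show "\<forall>Y. Y \<subseteq> E \<longrightarrow> Q Y \<subseteq> cl E CE' Y"
    proof (intro allI impI)
      fix Y assume YE: "Y \<subseteq> E"
      let ?Y0 = "cl E CE' Y"
      have "?Y0 \<in> CE'" by (rule cl_closed[OF assms(3)])
      hence "{q\<in>P. fst q \<in> ?Y0} \<in> CP" using m unfolding cls_mor_def by blast
      then obtain X0 Y1 where X0: "X0 \<in> CE" and Y1: "Y1 \<in> CE'"
        and eqs: "{q\<in>P. fst q \<in> ?Y0} = {q \<in> P. fst q \<in> X0 \<and> snd q \<in> Y1}"
        unfolding CP_def pb_closed_def P_def by blast
      have inP: "e \<in> E \<Longrightarrow> e' \<in> E \<Longrightarrow> p e = p e' \<Longrightarrow> (e, e') \<in> P" for e e'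
        unfolding P_def pb_set_def by auto
      have Y0sup: "Y \<subseteq> ?Y0" using YE by (rule cl_sup)
      have "Y \<subseteq> X0"
      proof
        fix y assume "y \<in> Y"
        hence "(y,y) \<in> {q\<in>P. fst q \<in> ?Y0}" using inP YE Y0sup by auto
        thus "y \<in> X0" using eqs by auto
      qed
      hence c1: "cl E CE Y \<subseteq> X0" using X0 by (rule cl_least[rotated])
      have "{e' \<in> E. p e' \<in> p ` Y} \<subseteq> Y1"
      proof
        fix e' assume "e' \<in> {e' \<in> E. p e' \<in> p ` Y}"
        then obtain y where "y \<in> Y" "e' \<in> E" "p e' = p y" by auto
        hence "(y,e') \<in> {q\<in>P. fst q \<in> ?Y0}" using inP YE Y0sup by auto
        thus "e' \<in> Y1" using eqs by auto
      qed
      hence c2: "cl E CE' {e' \<in> E. p e' \<in> p ` Y} \<subseteq> Y1" using Y1 by (rule cl_least[rotated])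
      show "Q Y \<subseteq> ?Y0"
      proof
        fix e assume "e \<in> Q Y"
        then obtain e' where "e \<in> E" "e \<in> cl E CE Y" "e' \<in> cl E CE' {e' \<in> E. p e' \<in> p ` Y}" "p e = p e'"
          unfolding Q_def by auto
        moreover have "e' \<in> E" using \<open>e' \<in> cl E CE' _\<close> unfolding cl_def by blast
        ultimately have "(e,e') \<in> {q \<in> P. fst q \<in> X0 \<and> snd q \<in> Y1}" using c1 c2 inP by auto
        hence "(e,e') \<in> {q\<in>P. fst q \<in> ?Y0}" using eqs by simp
        thus "e \<in> ?Y0" by simp
      qed
    qed
  next
    assume h: "\<forall>Y. Y \<subseteq> E \<longrightarrow> Q Y \<subseteq> cl E CE' Y"
    show "cls_mor P CP E CE' fst"
      unfolding cls_mor_def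
    proof (intro conjI ballI)
      fix x assume "x \<in> P" thus "fst x \<in> E" unfolding P_def pb_set_def by auto
    next
      fix Y0 assume Y0: "Y0 \<in> CE'"
      have Y0E: "Y0 \<subseteq> E" using CE'E[OF Y0] .
      let ?X0 = "cl E CE Y0" and ?Y1 = "cl E CE' {e' \<in> E. p e' \<in> p ` Y0}"
      have "{q\<in>P. fst q \<in> Y0} = {q \<in> P. fst q \<in> ?X0 \<and> snd q \<in> ?Y1}"
      proof (intro set_eqI iffI)
        fix q assume "q \<in> {q\<in>P. fst q \<in> Y0}"
        then obtain e e' where q: "q = (e,e')" "e \<in> E" "e' \<in> E" "p e = p e'" "e \<in> Y0"
          unfolding P_def pb_set_def by auto
        have "e \<in> ?X0" using cl_sup[OF Y0E] q by blast
        moreover have "e' \<in> {e' \<in> E. p e' \<in> p ` Y0}" using q by (metis (mono_tags, lifting) image_eqI mem_Collect_eq)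
        hence "e' \<in> ?Y1" using cl_sup[of "{e' \<in> E. p e' \<in> p ` Y0}" E CE'] by blast
        ultimately show "q \<in> {q \<in> P. fst q \<in> ?X0 \<and> snd q \<in> ?Y1}"
          using \<open>q \<in> {q\<in>P. fst q \<in> Y0}\<close> q by auto
      next
        fix q assume a: "q \<in> {q \<in> P. fst q \<in> ?X0 \<and> snd q \<in> ?Y1}"
        then obtain e e' where q: "q = (e,e')" "e \<in> E" "e' \<in> E" "p e = p e'" "e \<in> ?X0" "e' \<in> ?Y1"
          unfolding P_def pb_set_def by auto
        hence "e \<in> Q Y0" unfolding Q_def by auto
        hence "e \<in> cl E CE' Y0" using h Y0E by blast
        hence "e \<in> Y0" using cl_id[OF assms(3) Y0] by simp
        thus "q \<in> {q\<in>P. fst q \<in> Y0}" using a q by auto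
      qed
      moreover have "?X0 \<in> CE" by (rule cl_closed[OF assms(1)])
      moreover have "?Y1 \<in> CE'" by (rule cl_closed[OF assms(3)])
      ultimately show "{x \<in> P. fst x \<in> Y0} \<in> CP"
        unfolding CP_def pb_closed_def P_def by blast
    qed
  qed
  have ef: "(\<forall>Y. Y \<subseteq> E \<longrightarrow> Q Y \<subseteq> cl E CE' Y) \<longleftrightarrow> (\<forall>Y. Y \<subseteq> E \<longrightarrow> Q Y = cl E CE' Y)"
    using Qsup by blast
  have fg: "(\<forall>Y. Y \<subseteq> E \<longrightarrow> Q Y = cl E CE' Y) \<longleftrightarrow> (\<forall>Y\<in>CE'. Q Y \<subseteq> Y)"
  proof
    assume "\<forall>Y. Y \<subseteq> E \<longrightarrow> Q Y = cl E CE' Y"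
    thus "\<forall>Y\<in>CE'. Q Y \<subseteq> Y" using CE'E cl_id[OF assms(3)] by auto
  next
    assume g: "\<forall>Y\<in>CE'. Q Y \<subseteq> Y"
    show "\<forall>Y. Y \<subseteq> E \<longrightarrow> Q Y = cl E CE' Y"
    proof (intro allI impI)
      fix Y assume YE: "Y \<subseteq> E"
      have "Q Y \<subseteq> Q (cl E CE' Y)" using Qmono cl_sup[OF YE] by blast
      also have "\<dots> \<subseteq> cl E CE' Y" using g cl_closed[OF assms(3)] by blast
      finally show "Q Y = cl E CE' Y" using Qsup[OF YE] by blast
    qed
  qed
  have gh: "(\<forall>Y\<in>CE'. Q Y \<subseteq> Y) \<longleftrightarrow> (\<forall>Y\<in>CE'. Q Y = Y)"
    using Qsup CE'E cl_id[OF assms(3)] by (metis subset_antisym)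
  have ab: "(\<exists>\<xi>. descent_data E CE B CB p E CE' id \<xi>)
        \<longleftrightarrow> (\<exists>\<xi>. descent_data E CE B CB p E CE' id \<xi> \<and>
               (\<forall>\<xi>'. descent_data E CE B CB p E CE' id \<xi>' \<longrightarrow> (\<forall>q\<in>P. \<xi>' q = \<xi> q)))"
    using DD by metis
  have bc: "(\<exists>\<xi>. descent_data E CE B CB p E CE' id \<xi> \<and>
               (\<forall>\<xi>'. descent_data E CE B CB p E CE' id \<xi>' \<longrightarrow> (\<forall>q\<in>P. \<xi>' q = \<xi> q)))
        \<longleftrightarrow> descent_data E CE B CB p E CE' id fst"
    using DD by metis
  have cd: "descent_data E CE B CB p E CE' id fst \<longleftrightarrow> cls_mor P CP E CE' fst"
    using DD by simp
  show ?thesis using ab bc cd DE ef fg gh unfolding Q_def by blast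
qed
end
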